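(* For a multi-unit auction with $2$ bidders and $2$ identical items, where bidders have valuations with decreasing marginal values, no deterministic obviously strategy-proof mechanism that satisfies individual rationality and no negative transfers gives an approximation better than $2$; i.e., for every such mechanism there is a valuation profile $v$ with $\mathrm{OPT}(v)\ge 2\cdot W(v)$, or the ratio $\mathrm{OPT}(v)/W(v)$ has supremum at least $2$.
   Context: Bidder $i$'s valuation is $v_i:\{0,1,2\}\to\mathbb{R}_{\ge0}$ with $v_i(0)=0$ and decreasing marginals: $v_i(1)-v_i(0)\ge v_i(2)-v_i(1)$. The domain $V_i$ is all such valuations; valuations are private, utilities quasi-linear. A deterministic mechanism is a rooted tree: each internal node is assigned to one bidder, who sends one of the messages labeling the outgoing edges; each leaf is labeled with a feasible allocation and a payment per bidder. A behavior $B_i$ specifies a message at every node of bidder $i$; a profile $B$ determines a path $\mathrm{Path}(B)$ with allocation $f_i(B)$ and payment $p_i(B)$. A strategy $\mathcal S_i$ maps each $v_i\in V_i$ to a behavior; it is obviously dominant if for every $v_i\in V_i$, every node $u$ of $i$, every $B_{-i}$ and every profile $B'$ with $u\in\mathrm{Path}(\mathcal S_i(v_i),B_{-i})\cap\mathrm{Path}(B')$ and $B'_i$ sending at $u$ a message different from $\mathcal S_i(v_i)$'s, $v_i(f_i(\mathcal S_i(v_i),B_{-i}))-p_i(\mathcal S_i(v_i),B_{-i})\ge v_i(f_i(B'))-p_i(B')$. The mechanism is OSP if all strategies are obviously dominant; individually rational if for every profile in $V_1\times V_2$ following the strategies gives each bidder utility $\ge0$; satisfies no negative transfers if all payments at all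 leaves are $\ge0$. $W(v)$ is the welfare of the allocation reached on profile $v$ when bidders follow their strategies, $\mathrm{OPT}(v)$ the optimal welfare; approximation better than $2$ means $\sup_v\mathrm{OPT}(v)/W(v)<2$. *)

theory Defs
  imports Complex_Main
begin

text \<open>Two bidders, indexed by bool (False = bidder 1, True = bidder 2); two identical items.
  A mechanism is a rooted tree; internal nodes belong to a bidder and carry the set of
  messages labelling the outgoing edges; leaves carry an allocation (number of items per
  bidder) and a payment per bidder.\<close>

datatype 'm mech =
    Leaf "bool \<Rightarrow> nat" "bool \<Rightarrow> real"
  | Node bool "'m set" "'m \<Rightarrow> 'm mech"

text \<open>Nodes are identified by the history (list of messages) leading to them from the root.\<close>
fun subtree :: "'m mech \<Rightarrow> 'm list \<Rightarrow> 'm mech option" where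
  "subtree t [] = Some t"
| "subtree (Leaf a p) (m # h) = None"
| "subtree (Node i M c) (m # h) = (if m \<in> M then subtree (c m) h else None)"

definition wf_mech :: "'m mech \<Rightarrow> bool" where
  "wf_mech t \<longleftrightarrow>
     (\<forall>h a p. subtree t h = Some (Leaf a p) \<longrightarrow> a False + a True \<le> 2) \<and>
     (\<forall>h i M c. subtree t h = Some (Node i M c) \<longrightarrow> M \<noteq> {})"

type_synonym 'm behavior = "'m list \<Rightarrow> 'm"
type_synonym 'm profile = "bool \<Rightarrow> 'm behavior"

definition valid_beh :: "'m mech \<Rightarrow> bool \<Rightarrow> 'm behavior \<Rightarrow> bool" where
  "valid_beh t i b \<longleftrightarrow> (\<forall>h M c. subtree t h = Some (Node i M c) \<longrightarrow> b h \<in> M)"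

definition valid_profile :: "'m mech \<Rightarrow> 'm profile \<Rightarrow> bool" where
  "valid_profile t B \<longleftrightarrow> (\<forall>i. valid_beh t i (B i))"

primrec run :: "'m mech \<Rightarrow> 'm list \<Rightarrow> 'm profile \<Rightarrow> (bool \<Rightarrow> nat) \<times> (bool \<Rightarrow> real)" where
  "run (Leaf a p) = (\<lambda>h B. (a, p))"
| "run (Node i M c) = (\<lambda>h B. (run \<circ> c) (B i h) (h @ [B i h]) B)"

primrec path_nodes :: "'m mech \<Rightarrow> 'm list \<Rightarrow> 'm profile \<Rightarrow> 'm list set" where
  "path_nodes (Leaf a p) = (\<lambda>h B. {})"
| "path_nodes (Node i M c) = (\<lambda>h B. insert h ((path_nodes \<circ> c) (B i h) (h @ [B i h]) B))"

definition alloc :: "'m mech \<Rightarrow> 'm profile \<Rightarrow> bool \<Rightarrow> nat" where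
  "alloc t B = fst (run t [] B)"

definition pay :: "'m mech \<Rightarrow> 'm profile \<Rightarrow> bool \<Rightarrow> real" where
  "pay t B = snd (run t [] B)"

definition Path :: "'m mech \<Rightarrow> 'm profile \<Rightarrow> 'm list set" where
  "Path t B = path_nodes t [] B"

text \<open>Valuations v : {0,1,2} \<rightarrow> R>=0 with v 0 = 0 and decreasing marginals, represented as
  functions on nat that vanish above 2.\<close>
definition valuation :: "(nat \<Rightarrow> real) \<Rightarrow> bool" where
  "valuation v \<longleftrightarrow> v 0 = 0 \<and> 0 \<le> v 1 \<and> 0 \<le> v 2 \<and> v 1 - v 0 \<ge> v 2 - v 1 \<and>
                    (\<forall>n>2. v n = 0)"

definition utility :: "'m mech \<Rightarrow> (nat \<Rightarrow> real) \<Rightarrow> bool \<Rightarrow> 'm profile \<Rightarrow> real" where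
  "utility t v i B = v (alloc t B i) - pay t B i"

type_synonym 'm strategies = "bool \<Rightarrow> (nat \<Rightarrow> real) \<Rightarrow> 'm behavior"

definition strategies_valid :: "'m mech \<Rightarrow> 'm strategies \<Rightarrow> bool" where
  "strategies_valid t S \<longleftrightarrow> (\<forall>i v. valuation v \<longrightarrow> valid_beh t i (S i v))"

definition OSP :: "'m mech \<Rightarrow> 'm strategies \<Rightarrow> bool" where
  "OSP t S \<longleftrightarrow>
    (\<forall>i v h M c B B'.
       valuation v \<longrightarrow> subtree t h = Some (Node i M c) \<longrightarrow>
       valid_profile t B \<longrightarrow> valid_profile t B' \<longrightarrow>
       h \<in> Path t (B(i := S i v)) \<longrightarrow> h \<in> Path t B' \<longrightarrow>
       B' i h \<noteq> S i v h \<longrightarrow>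
       utility t v i (B(i := S i v)) \<ge> utility t v i B')"

definition follow :: "'m strategies \<Rightarrow> (bool \<Rightarrow> nat \<Rightarrow> real) \<Rightarrow> 'm profile" where
  "follow S vp = (\<lambda>j. S j (vp j))"

definition indiv_rational :: "'m mech \<Rightarrow> 'm strategies \<Rightarrow> bool" where
  "indiv_rational t S \<longleftrightarrow>
    (\<forall>vp. (\<forall>j. valuation (vp j)) \<longrightarrow> (\<forall>i. utility t (vp i) i (follow S vp) \<ge> 0))"

definition no_negative_transfers :: "'m mech \<Rightarrow> bool" where
  "no_negative_transfers t \<longleftrightarrow> (\<forall>h a p. subtree t h = Some (Leaf a p) \<longrightarrow> (\<forall>j. p j \<ge> 0))"

definition welfare :: "'m mech \<Rightarrow> 'm strategies \<Rightarrow> (bool \<Rightarrow> nat \<Rightarrow> real) \<Rightarrow> real" where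
  "welfare t S vp = vp False (alloc t (follow S vp) False) + vp True (alloc t (follow S vp) True)"

definition OPT :: "(bool \<Rightarrow> nat \<Rightarrow> real) \<Rightarrow> real" where
  "OPT vp = Max ((\<lambda>(a, b). vp False a + vp True b) ` {(a, b). a + b \<le> (2::nat)})"

end

theory Submission
  imports Defs
begin

definition lin :: "real \<Rightarrow> nat \<Rightarrow> real" where
  "lin s = (\<lambda>n. if n = 1 then s else if n = 2 then 2*s else 0)"

lemma lin_val: "0 \<le> s \<Longrightarrow> valuation (lin s)"
  by (auto simp: valuation_def lin_def)

lemma subtree_append: "subtree t h = Some u \<Longrightarrow> subtree t (h @ g) = subtree u g"
proof (induction h arbitrary: t)
  case Nil then show ?case by simp
next
  case (Cons m h)
  then show ?case by (cases t) (auto split: if_splits)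
qed

lemma run_leaf:
  assumes vp: "valid_profile t B"
  shows "subtree t g = Some u \<Longrightarrow> \<exists>h. subtree t h = Some (Leaf (fst (run u g B)) (snd (run u g B)))"
proof (induction u arbitrary: g)
  case (Leaf a p) then show ?case by auto
next
  case (Node i M c)
  have "B i g \<in> M" using vp Node.prems by (auto simp: valid_profile_def valid_beh_def)
  then have "subtree t (g @ [B i g]) = Some (c (B i g))"
    using subtree_append[OF Node.prems, of "[B i g]"] by simp
  from Node.IH[OF _ this] show ?case by simp
qed

lemma leaf_of:
  assumes "valid_profile t B"
  shows "\<exists>h. subtree t h = Some (Leaf (alloc t B) (pay t B))"
  using run_leaf[OF assms, of "[]" t] by (simp add: alloc_def pay_def)

lemma feas:
  assumes "valid_profile t B" "wf_mech t"
  shows "alloc t B i + alloc t B (\<not> i) \<le> 2"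
  using leaf_of[OF assms(1)] assms(2) unfolding wf_mech_def
  by (cases i) (auto simp: add.commute)

lemma nonneg_pay:
  assumes "valid_profile t B" "no_negative_transfers t"
  shows "pay t B j \<ge> 0"
  using leaf_of[OF assms(1)] assms(2) unfolding no_negative_transfers_def by blast

lemma OPT_ge:
  assumes "a + b \<le> (2::nat)"
  shows "vp i a + vp (\<not> i) b \<le> OPT vp"
proof -
  have fin: "finite {(a, b). a + b \<le> (2::nat)}"
    by (rule finite_subset[of _ "{..2::nat} \<times> {..2::nat}"]) auto
  show ?thesis
  proof (cases i)
    case True
    have "vp False b + vp True a \<le> OPT vp" unfolding OPT_def
      by (rule Max_ge) (use fin assms in \<open>auto intro!: image_eqI[where x="(b,a)"]\<close>)
    then show ?thesis using True by simp
  next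
    case False
    have "vp False a + vp True b \<le> OPT vp" unfolding OPT_def
      by (rule Max_ge) (use fin assms in \<open>auto intro!: image_eqI[where x="(a,b)"]\<close>)
    then show ?thesis using False by simp
  qed
qed

lemma welfare_i: "welfare t S vp = vp i (alloc t (follow S vp) i) + vp (\<not> i) (alloc t (follow S vp) (\<not> i))"
  by (cases i) (auto simp: welfare_def)

lemma forced_zero_arith:
  fixes s c T :: real
  assumes "0 < s" "c < 2" "T = 2*s/(2-c)" "ai + ao \<le> (2::nat)"
    "2*T \<le> c * (lin s ai + lin T ao)"
  shows "ai = 0"
proof (rule ccontr)
  assume nz: "ai \<noteq> 0"
  have Tp: "(2-c)*T = 2*s" using assms(2,3) by simp
  have T0: "T > 0" using assms(1,2,3) by simp
  have ai: "ai = 1 \<or> ai = 2" using nz assms(4) by auto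
  show False
  proof (cases "c \<le> 0")
    case True
    have "lin s ai + lin T ao \<ge> 0" using assms(1) T0 by (auto simp: lin_def)
    then have "c * (lin s ai + lin T ao) \<le> 0" using True by (simp add: mult_nonpos_nonneg)
    then show False using assms(5) T0 by linarith
  next
    case False
    then have c0: "c > 0" by simp
    from ai show False
    proof
      assume a1: "ai = 1"
      then have "ao \<le> 1" using assms(4) by simp
      then have "lin T ao \<le> T" using T0 by (auto simp: lin_def)
      then have "c * (lin s ai + lin T ao) \<le> c * (s + T)" using a1 c0 by (simp add: lin_def)
      moreover have "c * (s + T) < 2 * T"
      proof -
        have "c * s < 2 * s" using c0 assms(1,2) by simp
        then show ?thesis using Tp by (simp add: algebra_simps)
      qed
      ultimately show False using assms(5) by linarith
    next
      assume a2: "ai = 2"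
      then have "ao = 0" using assms(4) by simp
      then have eq: "c * (lin s ai + lin T ao) = c * (2*s)" using a2 by (simp add: lin_def)
      have "0 \<le> (c - 1) * (c - 1)" by simp
      then have "c * (2 - c) \<le> 1" by (simp add: algebra_simps)
      then have "c * (2-c) * T \<le> 1 * T" using T0 by (intro mult_right_mono) auto
      then have "c * (2-c) * T < 2 * T" using T0 by linarith
      moreover have "c * (2 * s) = c * ((2-c) * T)" using Tp by simp
      ultimately have "c * (2 * s) < 2 * T" by (metis mult.assoc)
      then show False using eq assms(5) by linarith
    qed
  qed
qed

lemma pos_arith:
  fixes c e Op :: real
  assumes "valuation z" "z 1 > 0" "c < 2" "e = z 1 / 4" "ai + ao \<le> (2::nat)"
    "z 1 + e \<le> Op" "Op \<le> c * (z ai + lin e ao)"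
  shows "ai \<noteq> 0"
proof
  assume a0: "ai = 0"
  have z0: "z 0 = 0" using assms(1) by (simp add: valuation_def)
  have "ao \<le> 2" using assms(5) by simp
  then have W: "0 \<le> lin e ao" "lin e ao \<le> 2*e" using assms(2,4) by (auto simp: lin_def)
  have "c * (lin e ao) \<le> 2 * (lin e ao)"
    using W(1) assms(3) by (intro mult_right_mono) auto
  moreover have "Op \<le> c * lin e ao" using a0 z0 assms(7) by simp
  moreover have "4 * e = z 1" using assms(4) by simp
  ultimately show False using assms(2,6) W by linarith
qed

lemma valid_follow: "strategies_valid t S \<Longrightarrow> (\<forall>j. valuation (vp j)) \<Longrightarrow> valid_profile t (follow S vp)"
  by (auto simp: strategies_valid_def valid_profile_def follow_def)

lemma zero_alloc:
  assumes apx: "\<forall>vp. (\<forall>j. valuation (vp j)) \<longrightarrow> OPT vp \<le> c * welfare t S vp"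
    and c2: "c < 2" and sv: "strategies_valid t S" and wf: "wf_mech t"
    and s0: "0 < s" and vp: "vp = (\<lambda>j. if j = i then lin s else lin (2*s/(2-c)))"
  shows "alloc t (follow S vp) i = 0"
proof -
  define T where "T = 2*s/(2-c)"
  have T0: "T > 0" using s0 c2 by (simp add: T_def)
  have vals: "\<forall>j. valuation (vp j)" using s0 T0 by (auto simp: vp T_def[symmetric] intro: lin_val)
  have "vp i 0 + vp (\<not> i) 2 \<le> OPT vp" by (rule OPT_ge) simp
  then have o: "2 * T \<le> OPT vp" by (simp add: vp T_def[symmetric] lin_def)
  have w: "welfare t S vp = lin s (alloc t (follow S vp) i) + lin T (alloc t (follow S vp) (\<not> i))"
    using welfare_i[of t S vp i] by (simp add: vp T_def[symmetric])
  have f: "alloc t (follow S vp) i + alloc t (follow S vp) (\<not> i) \<le> 2"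
    by (rule feas[OF valid_follow[OF sv vals] wf])
  show ?thesis
  proof (rule forced_zero_arith[OF s0 c2 T_def f])
    have "OPT vp \<le> c * welfare t S vp" using apx vals by blast
    then show "2 * T \<le> c * (lin s (alloc t (follow S vp) i) + lin T (alloc t (follow S vp) (\<not> i)))"
      using o w by simp
  qed
qed

lemma key0:
  assumes apx: "\<forall>vp. (\<forall>j. valuation (vp j)) \<longrightarrow> OPT vp \<le> c * welfare t S vp"
    and c2: "c < 2" and sv: "strategies_valid t S" and wf: "wf_mech t"
    and osp: "OSP t S" and ir: "indiv_rational t S" and nnt: "no_negative_transfers t"
    and sub: "subtree t h = Some (Node i M cc)"
    and onp: "\<forall>vp. (\<forall>j. valuation (vp j) \<and> vp j 1 > 0) \<longrightarrow> h \<in> Path t (follow S vp)"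
    and z: "valuation z" "z 1 > 0" and sz: "s > z 1" "2 * s > z 2"
    and ne: "S i z h \<noteq> S i (lin s) h"
  shows False
proof -
  have z12: "z 1 \<ge> 0" "z 2 \<ge> 0" using z(1) by (auto simp: valuation_def)
  have s0: "s > 0" using sz z by linarith
  define T where "T = 2*s/(2-c)"
  have T0: "T > 0" using s0 c2 by (simp add: T_def)
  define e where "e = z 1 / 4"
  have e0: "e > 0" using z by (simp add: e_def)
  define vp where "vp = (\<lambda>j. if j = i then lin s else lin T)"
  define vq where "vq = (\<lambda>j. if j = i then z else lin e)"
  have valp: "\<forall>j. valuation (vp j) \<and> vp j 1 > 0" using s0 T0 lin_val[of s] lin_val[of T] by (auto simp: vp_def) (auto simp: lin_def)
  have valq: "\<forall>j. valuation (vq j) \<and> vq j 1 > 0" using z e0 lin_val[of e] by (auto simp: vq_def) (auto simp: lin_def)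
  have valp': "\<forall>j. valuation (vp j)" and valq': "\<forall>j. valuation (vq j)" using valp valq by auto
  define B where "B = follow S vp"
  define B' where "B' = follow S vq"
  have BB: "B(i := S i (lin s)) = B" by (auto simp: B_def follow_def vp_def)
  have vB: "valid_profile t B" and vB': "valid_profile t B'"
    using valid_follow[OF sv valp'] valid_follow[OF sv valq'] by (auto simp: B_def B'_def)
  have hB: "h \<in> Path t (B(i := S i (lin s)))" using onp valp BB by (simp add: B_def)
  have hB': "h \<in> Path t B'" using onp valq by (simp add: B'_def)
  have neB: "B' i h \<noteq> S i (lin s) h" using ne by (simp add: B'_def follow_def vq_def)
  have "utility t (lin s) i (B(i := S i (lin s))) \<ge> utility t (lin s) i B'"
    using osp lin_val[of s] s0 sub vB vB' hB hB' neB unfolding OSP_def by fastforce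
  then have U: "utility t (lin s) i B \<ge> utility t (lin s) i B'" using BB by simp
  have a0: "alloc t B i = 0"
    using zero_alloc[OF apx c2 sv wf s0, of vp i] unfolding B_def vp_def T_def by simp
  have p0: "pay t B i \<ge> 0" using nonneg_pay[OF vB nnt] .
  have uL: "utility t (lin s) i B \<le> 0" using a0 p0 by (simp add: utility_def lin_def)
  define a where "a = alloc t B' i"
  have fq: "a + alloc t B' (\<not> i) \<le> 2" using feas[OF vB' wf] by (simp add: a_def)
  have "vq i 1 + vq (\<not> i) 1 \<le> OPT vq" by (rule OPT_ge) simp
  then have o: "z 1 + e \<le> OPT vq" by (simp add: vq_def lin_def)
  have w: "welfare t S vq = z a + lin e (alloc t B' (\<not> i))"
    using welfare_i[of t S vq i] by (simp add: vq_def a_def B'_def)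
  have "OPT vq \<le> c * welfare t S vq" using apx valq' by blast
  then have an: "a \<noteq> 0" using pos_arith[OF z c2 e_def fq o] w by simp
  have a2: "a = 1 \<or> a = 2" using an fq by auto
  have ir': "z a - pay t B' i \<ge> 0"
  proof -
    have "utility t (vq i) i (follow S vq) \<ge> 0" using ir valq' unfolding indiv_rational_def by blast
    then show ?thesis by (simp add: utility_def B'_def a_def vq_def)
  qed
  have "lin s a > z a" using a2 sz by (auto simp: lin_def)
  then have "utility t (lin s) i B' > 0" using ir' by (simp add: utility_def a_def)
  then show False using U uL by linarith
qed

lemma key:
  assumes apx: "\<forall>vp. (\<forall>j. valuation (vp j)) \<longrightarrow> OPT vp \<le> c * welfare t S vp"
    and c2: "c < 2" and sv: "strategies_valid t S" and wf: "wf_mech t"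
    and osp: "OSP t S" and ir: "indiv_rational t S" and nnt: "no_negative_transfers t"
    and sub: "subtree t h = Some (Node i M cc)"
    and onp: "\<forall>vp. (\<forall>j. valuation (vp j) \<and> vp j 1 > 0) \<longrightarrow> h \<in> Path t (follow S vp)"
    and x: "valuation x" "x 1 > 0" and y: "valuation y" "y 1 > 0"
  shows "S i x h = S i y h"
proof (rule ccontr)
  assume ne: "S i x h \<noteq> S i y h"
  define s where "s = x 1 + x 2 + y 1 + y 2 + 1"
  have "x 2 \<ge> 0" "y 2 \<ge> 0" using x y by (auto simp: valuation_def)
  then have sx: "s > x 1" "2 * s > x 2" and sy: "s > y 1" "2 * s > y 2" using x y by (auto simp: s_def)
  show False
  proof (cases "S i x h = S i (lin s) h")
    case True
    then have "S i y h \<noteq> S i (lin s) h" using ne by simp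
    then show False using key0[OF apx c2 sv wf osp ir nnt sub onp y sy] by blast
  next
    case False
    then show False using key0[OF apx c2 sv wf osp ir nnt sub onp x sx] by blast
  qed
qed

lemma walk:
  assumes sv: "strategies_valid t S"
    and keyall: "\<And>h i M cc x y. subtree t h = Some (Node i M cc) \<Longrightarrow>
        (\<forall>vp. (\<forall>j. valuation (vp j) \<and> vp j 1 > 0) \<longrightarrow> h \<in> Path t (follow S vp)) \<Longrightarrow>
        valuation x \<Longrightarrow> x 1 > 0 \<Longrightarrow> valuation y \<Longrightarrow> y 1 > 0 \<Longrightarrow> S i x h = S i y h"
  shows "subtree t h = Some u \<Longrightarrow>
    (\<forall>vp. (\<forall>j. valuation (vp j) \<and> vp j 1 > 0) \<longrightarrow>
        run t [] (follow S vp) = run u h (follow S vp) \<and> path_nodes u h (follow S vp) \<subseteq> Path t (follow S vp)) \<Longrightarrow>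
    (\<forall>vp vq. (\<forall>j. valuation (vp j) \<and> vp j 1 > 0) \<longrightarrow> (\<forall>j. valuation (vq j) \<and> vq j 1 > 0) \<longrightarrow>
        run u h (follow S vp) = run u h (follow S vq))"
proof (induction u arbitrary: h)
  case (Leaf a p) then show ?case by simp
next
  case (Node i M cc)
  have onp: "\<forall>vp. (\<forall>j. valuation (vp j) \<and> vp j 1 > 0) \<longrightarrow> h \<in> Path t (follow S vp)"
  proof (intro allI impI)
    fix vp :: "bool \<Rightarrow> nat \<Rightarrow> real" assume v: "\<forall>j. valuation (vp j) \<and> vp j 1 > 0"
    have "path_nodes (Node i M cc) h (follow S vp) \<subseteq> Path t (follow S vp)" using Node.prems(2) v by blast
    then show "h \<in> Path t (follow S vp)" by simp
  qed
  define m where "m = S i (lin 1) h"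
  have l1: "valuation (lin 1)" "lin 1 1 > 0" using lin_val[of 1] by (auto simp: lin_def)
  have msg: "follow S vp i h = m" if "\<forall>j. valuation (vp j) \<and> vp j 1 > 0" for vp
  proof -
    have "S i (vp i) h = S i (lin 1) h" by (rule keyall[OF Node.prems(1) onp]) (use that l1 in auto)
    then show ?thesis by (simp add: follow_def m_def)
  qed
  have mM: "m \<in> M" using sv Node.prems(1) l1 unfolding strategies_valid_def valid_beh_def m_def by blast
  have sub': "subtree t (h @ [m]) = Some (cc m)"
    using subtree_append[OF Node.prems(1), of "[m]"] mM by simp
  have prem': "\<forall>vp. (\<forall>j. valuation (vp j) \<and> vp j 1 > 0) \<longrightarrow>
        run t [] (follow S vp) = run (cc m) (h @ [m]) (follow S vp) \<and> path_nodes (cc m) (h @ [m]) (follow S vp) \<subseteq> Path t (follow S vp)"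
  proof (intro allI impI)
    fix vp :: "bool \<Rightarrow> nat \<Rightarrow> real" assume v: "\<forall>j. valuation (vp j) \<and> vp j 1 > 0"
    show "run t [] (follow S vp) = run (cc m) (h @ [m]) (follow S vp) \<and> path_nodes (cc m) (h @ [m]) (follow S vp) \<subseteq> Path t (follow S vp)"
    proof -
      have r: "run t [] (follow S vp) = run (Node i M cc) h (follow S vp)"
        and p: "path_nodes (Node i M cc) h (follow S vp) \<subseteq> Path t (follow S vp)"
        using Node.prems(2) v by blast+
      have mm: "follow S vp i h = m" using msg[OF v] .
      have "run (Node i M cc) h (follow S vp) = run (cc m) (h @ [m]) (follow S vp)" using mm by simp
      moreover have "path_nodes (cc m) (h @ [m]) (follow S vp) \<subseteq> path_nodes (Node i M cc) h (follow S vp)"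
        using mm by auto
      ultimately show ?thesis using r p by (metis subset_trans)
    qed
  qed
  have IH: "\<forall>vp vq. (\<forall>j. valuation (vp j) \<and> vp j 1 > 0) \<longrightarrow> (\<forall>j. valuation (vq j) \<and> vq j 1 > 0) \<longrightarrow>
        run (cc m) (h @ [m]) (follow S vp) = run (cc m) (h @ [m]) (follow S vq)"
    by (rule Node.IH[OF rangeI sub' prem'])
  show ?case
  proof (intro allI impI)
    fix vp vq :: "bool \<Rightarrow> nat \<Rightarrow> real" assume v: "\<forall>j. valuation (vp j) \<and> vp j 1 > 0" "\<forall>j. valuation (vq j) \<and> vq j 1 > 0"
    show "run (Node i M cc) h (follow S vp) = run (Node i M cc) h (follow S vq)"
    proof -
      have e: "run (cc m) (h @ [m]) (follow S vp) = run (cc m) (h @ [m]) (follow S vq)"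
        using IH v by blast
      show ?thesis using e msg[OF v(1)] msg[OF v(2)] by simp
    qed
  qed
qed

theorem theorem3p12:
  fixes t :: "'m mech" and S :: "'m strategies"
  assumes "wf_mech t"
    and "strategies_valid t S"
    and "OSP t S"
    and "indiv_rational t S"
    and "no_negative_transfers t"
  shows "\<forall>c::real. c < 2 \<longrightarrow>
           (\<exists>vp. (\<forall>j. valuation (vp j)) \<and> OPT vp > c * welfare t S vp)"
proof (intro allI impI)
  fix c :: real assume c2: "c < 2"
  show "\<exists>vp. (\<forall>j. valuation (vp j)) \<and> OPT vp > c * welfare t S vp"
  proof (rule ccontr)
    assume "\<not> ?thesis"
    then have apx: "\<forall>vp. (\<forall>j. valuation (vp j)) \<longrightarrow> OPT vp \<le> c * welfare t S vp"
      by (auto simp: not_less)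
    have keyall: "S i x h = S i y h"
      if "subtree t h = Some (Node i M cc)"
        "\<forall>vp. (\<forall>j. valuation (vp j) \<and> vp j 1 > 0) \<longrightarrow> h \<in> Path t (follow S vp)"
        "valuation x" "x 1 > 0" "valuation y" "y 1 > 0" for h i M cc x y
      by (rule key[OF apx c2 assms(2,1,3,4,5) that])
    have all: "\<forall>vp vq. (\<forall>j. valuation (vp j) \<and> vp j 1 > 0) \<longrightarrow> (\<forall>j. valuation (vq j) \<and> vq j 1 > 0) \<longrightarrow>
        run t [] (follow S vp) = run t [] (follow S vq)"
      by (rule walk[OF assms(2) keyall]) (auto simp: Path_def)
    define T where "T = 2 * 1 / (2 - c)"
    have T0: "T > 0" using c2 by (simp add: T_def)
    define vp1 where "vp1 = (\<lambda>j. if j = False then lin 1 else lin T)"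
    define vp2 where "vp2 = (\<lambda>j. if j = True then lin 1 else lin T)"
    have v1: "\<forall>j. valuation (vp1 j) \<and> vp1 j 1 > 0" and v2: "\<forall>j. valuation (vp2 j) \<and> vp2 j 1 > 0"
      using T0 lin_val[of 1] lin_val[of T] by (auto simp: vp1_def vp2_def) (auto simp: lin_def)
    have z1: "alloc t (follow S vp1) False = 0"
      using zero_alloc[OF apx c2 assms(2,1), of 1 vp1 False] unfolding vp1_def T_def by simp
    have z2: "alloc t (follow S vp2) True = 0"
      using zero_alloc[OF apx c2 assms(2,1), of 1 vp2 True] unfolding vp2_def T_def by simp
    have "run t [] (follow S vp1) = run t [] (follow S vp2)" using all v1 v2 by blast
    then have "alloc t (follow S vp1) = alloc t (follow S vp2)" by (simp add: alloc_def)
    then have z3: "alloc t (follow S vp1) True = 0" using z2 by simp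
    have w0: "welfare t S vp1 = 0" using z1 z3 by (simp add: welfare_def vp1_def lin_def)
    have "vp1 False 0 + vp1 (\<not> False) 2 \<le> OPT vp1" by (rule OPT_ge) simp
    then have "2 * T \<le> OPT vp1" by (simp add: vp1_def lin_def)
    moreover have "OPT vp1 \<le> c * welfare t S vp1" using apx v1 by blast
    ultimately show False using w0 T0 by simp
  qed
qed

end
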